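(* Let $(\mathcal{H}, p_0, \mathcal{Z}, T, \mathcal{Y}, O)$ be a learning POMDP, let $h^* \in \mathcal{H}$ be a target hypothesis, let $0<\lambda\le 1$ be a teaching performance and let $t^*\in\mathbb{N}_{\ge 1}$ be a pre-set number of trials. Suppose there exist a polynomial $B\in\mathcal{R}[t,b]$ of degree $d$, a sum-of-squares polynomial $p^f\in\Sigma[b]$, and constants $s_1,s_2>0$ such that (i) $B(t^*,b)+p^f(b)\big(b(h^* )-\lambda\big)-s_1\in\Sigma[b]$; (ii) $-B(0,p_0)-s_2>0$; (iii) for all $t\in\{1,\dots,t^*\}$, $y\in\mathcal{Y}$, $z\in\mathcal{Z}$: $$-R_z(b,y)^d\Big(B\Big(t,\tfrac{S_z(b,y)}{R_z(b,y)}\Big)-B(t-1,b)\Big)\in\Sigma[t,b].$$ Then there exists no solution of the belief dynamics $b_t=f_{z}(b_{t-1},y_t)$ (with arbitrary examples $z\in\mathcal{Z}$ and observations $y_t\in\mathcal{Y}$) with $b_0=p_0$ and $b_{t^*}\in\mathcal{B}_f$, where $\mathcal{B}_f=\{b\in\mathcal{B}: b(h^* )<\lambda\}$; hence the teaching performance is satisfied, i.e. $b_{t^*}(h^* )\ge\lambda$ along all such trajectories.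
   Context: A learning POMDP is a tuple $(\mathcal{H}, p_0, \mathcal{Z}, T, \mathcal{Y}, O)$ where $\mathcal{H}$ is a finite set of hypotheses, $\mathcal{Z}$ a finite set of examples (actions), $\mathcal{Y}$ a finite set of observations, $p_0$ an initial distribution on $\mathcal{H}$, $T(h,z,h')\in[0,1]$ transition probabilities and $O(y\mid h',z)\in[0,1]$ observation probabilities. $\mathcal{B}$ is the unit simplex of beliefs on $\mathcal{H}$; $b=(b(h))_{h\in\mathcal{H}}$ are treated as real variables. The belief update $f_z(b,y)$ is the rational map with components $f_z^{h'}(b,y)=S_z^{h'}(b,y)/R_z(b,y)$, where $S_z^{h'}(b,y)=O(y\mid h',z)\sum_{h\in\mathcal{H}}T(h,z,h')b(h)$ and $R_z(b,y)=\sum_{h''\in\mathcal{H}}O(y\mid h'',z)\sum_{h\in\mathcal{H}}T(h,z,h'')b(h)$; $S_z/R_z$ denotes the vector with these components. $\mathcal{R}[x]$ denotes real polynomials in the variables $x$, and $\Sigma[x]\subset\mathcal{R}[x]$ the polynomials that are sums of squares of polynomials. *)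

theory Defs
  imports Complex_Main
begin

definition monomial_val :: "('v::finite \<Rightarrow> nat) \<Rightarrow> ('v \<Rightarrow> real) \<Rightarrow> real" where
  "monomial_val \<alpha> x = (\<Prod>v\<in>UNIV. x v ^ \<alpha> v)"

definition mdeg :: "('v::finite \<Rightarrow> nat) \<Rightarrow> nat" where
  "mdeg \<alpha> = (\<Sum>v\<in>UNIV. \<alpha> v)"

definition poly_fun_deg_le :: "(('v::finite \<Rightarrow> real) \<Rightarrow> real) \<Rightarrow> nat \<Rightarrow> bool" where
  "poly_fun_deg_le f d \<longleftrightarrow>
     (\<exists>c :: ('v \<Rightarrow> nat) \<Rightarrow> real.
        finite {\<alpha>. c \<alpha> \<noteq> 0} \<and> (\<forall>\<alpha>. c \<alpha> \<noteq> 0 \<longrightarrow> mdeg \<alpha> \<le> d) \<and>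
        f = (\<lambda>x. \<Sum>\<alpha>\<in>{\<alpha>. c \<alpha> \<noteq> 0}. c \<alpha> * monomial_val \<alpha> x))"

definition poly_fun :: "(('v::finite \<Rightarrow> real) \<Rightarrow> real) \<Rightarrow> bool" where
  "poly_fun f \<longleftrightarrow> (\<exists>d. poly_fun_deg_le f d)"

definition poly_fun_degree :: "(('v::finite \<Rightarrow> real) \<Rightarrow> real) \<Rightarrow> nat \<Rightarrow> bool" where
  "poly_fun_degree f d \<longleftrightarrow> poly_fun_deg_le f d \<and> (\<forall>d'<d. \<not> poly_fun_deg_le f d')"

definition sos_fun :: "(('v::finite \<Rightarrow> real) \<Rightarrow> real) \<Rightarrow> bool" where
  "sos_fun f \<longleftrightarrow> (\<exists>qs. (\<forall>q\<in>set qs. poly_fun q) \<and> f = (\<lambda>x. \<Sum>q\<leftarrow>qs. (q x)\<^sup>2))"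

text \<open>Functions of (t,b): the variable None is t, Some h is b(h).\<close>
definition tb_fun :: "(real \<Rightarrow> ('h \<Rightarrow> real) \<Rightarrow> real) \<Rightarrow> ('h option \<Rightarrow> real) \<Rightarrow> real" where
  "tb_fun B x = B (x None) (\<lambda>h. x (Some h))"

definition belief_simplex :: "('h::finite \<Rightarrow> real) set" where
  "belief_simplex = {b. (\<forall>h. 0 \<le> b h) \<and> (\<Sum>h\<in>UNIV. b h) = 1}"

definition learning_pomdp ::
  "('h::finite \<Rightarrow> real) \<Rightarrow> ('h \<Rightarrow> 'z::finite \<Rightarrow> 'h \<Rightarrow> real) \<Rightarrow> ('y::finite \<Rightarrow> 'h \<Rightarrow> 'z \<Rightarrow> real) \<Rightarrow> bool" where
  "learning_pomdp p0 T Obs \<longleftrightarrow>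
     p0 \<in> belief_simplex \<and>
     (\<forall>h z h'. 0 \<le> T h z h' \<and> T h z h' \<le> 1) \<and>
     (\<forall>h z. (\<Sum>h'\<in>UNIV. T h z h') = 1) \<and>
     (\<forall>y h' z. 0 \<le> Obs y h' z \<and> Obs y h' z \<le> 1) \<and>
     (\<forall>h' z. (\<Sum>y\<in>UNIV. Obs y h' z) = 1)"

text \<open>S_z^{h'}(b,y) and R_z(b,y); Obs y h' z stands for O(y | h', z).\<close>
definition S_upd :: "('h::finite \<Rightarrow> 'z \<Rightarrow> 'h \<Rightarrow> real) \<Rightarrow> ('y \<Rightarrow> 'h \<Rightarrow> 'z \<Rightarrow> real)
    \<Rightarrow> 'z \<Rightarrow> ('h \<Rightarrow> real) \<Rightarrow> 'y \<Rightarrow> 'h \<Rightarrow> real" where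
  "S_upd T Obs z b y h' = Obs y h' z * (\<Sum>h\<in>UNIV. T h z h' * b h)"

definition R_upd :: "('h::finite \<Rightarrow> 'z \<Rightarrow> 'h \<Rightarrow> real) \<Rightarrow> ('y \<Rightarrow> 'h \<Rightarrow> 'z \<Rightarrow> real)
    \<Rightarrow> 'z \<Rightarrow> ('h \<Rightarrow> real) \<Rightarrow> 'y \<Rightarrow> real" where
  "R_upd T Obs z b y = (\<Sum>h''\<in>UNIV. Obs y h'' z * (\<Sum>h\<in>UNIV. T h z h'' * b h))"

definition f_upd :: "('h::finite \<Rightarrow> 'z \<Rightarrow> 'h \<Rightarrow> real) \<Rightarrow> ('y \<Rightarrow> 'h \<Rightarrow> 'z \<Rightarrow> real)
    \<Rightarrow> 'z \<Rightarrow> ('h \<Rightarrow> real) \<Rightarrow> 'y \<Rightarrow> 'h \<Rightarrow> real" where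
  "f_upd T Obs z b y = (\<lambda>h'. S_upd T Obs z b y h' / R_upd T Obs z b y)"

definition fail_set :: "'h::finite \<Rightarrow> real \<Rightarrow> ('h \<Rightarrow> real) set" where
  "fail_set hstar lam = {b \<in> belief_simplex. b hstar < lam}"

end

theory Submission
  imports Defs
begin

lemma sos_nonneg: "sos_fun q \<Longrightarrow> 0 \<le> q x"
  unfolding sos_fun_def by (auto intro!: sum_list_nonneg)

theorem corollary1:
  fixes p0 :: "'h::finite \<Rightarrow> real"
    and T :: "'h \<Rightarrow> 'z::finite \<Rightarrow> 'h \<Rightarrow> real"
    and Obs :: "'y::finite \<Rightarrow> 'h \<Rightarrow> 'z \<Rightarrow> real"
    and hstar :: 'h and lam :: real and tstar :: nat
    and B :: "real \<Rightarrow> ('h \<Rightarrow> real) \<Rightarrow> real" and d :: nat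
    and pf :: "('h \<Rightarrow> real) \<Rightarrow> real" and s1 s2 :: real
    and b :: "nat \<Rightarrow> 'h \<Rightarrow> real" and zs :: "nat \<Rightarrow> 'z" and ys :: "nat \<Rightarrow> 'y"
  assumes pomdp: "learning_pomdp p0 T Obs"
    and lam: "0 < lam" "lam \<le> 1"
    and tstar: "1 \<le> tstar"
    and B_deg: "poly_fun_degree (tb_fun B) d"
    and pf_sos: "sos_fun pf"
    and s_pos: "0 < s1" "0 < s2"
    and cond_i: "sos_fun (\<lambda>x. B (real tstar) x + pf x * (x hstar - lam) - s1)"
    and cond_ii: "- B 0 p0 - s2 > 0"
    and cond_iii: "\<forall>t\<in>{1..tstar}. \<forall>y z. \<exists>q. sos_fun q \<and>
        (\<forall>x. R_upd T Obs z x y \<noteq> 0 \<longrightarrow>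
           q (\<lambda>v. case v of None \<Rightarrow> real t | Some h \<Rightarrow> x h) =
           - ((R_upd T Obs z x y) ^ d) *
               (B (real t) (f_upd T Obs z x y) - B (real t - 1) x))"
    and traj0: "b 0 = p0"
    and traj: "\<forall>t\<in>{1..tstar}. R_upd T Obs (zs t) (b (t - 1)) (ys t) \<noteq> 0 \<and>
                 b t = f_upd T Obs (zs t) (b (t - 1)) (ys t)"
  shows "b tstar \<notin> fail_set hstar lam \<and> lam \<le> b tstar hstar"
proof -
  have Tnn: "\<And>h z h'. 0 \<le> T h z h'" and Onn: "\<And>y h z. 0 \<le> Obs y h z"
    and p0nn: "\<And>h. 0 \<le> p0 h"
    using pomdp unfolding learning_pomdp_def belief_simplex_def by auto
  have Rnn: "0 \<le> R_upd T Obs z x y" if "\<And>h. 0 \<le> x h" for z x y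
    unfolding R_upd_def using Tnn Onn that by (auto intro!: sum_nonneg mult_nonneg_nonneg)
  have nn: "t \<le> tstar \<Longrightarrow> 0 \<le> b t h" for t h
  proof (induction t arbitrary: h)
    case 0 then show ?case using traj0 p0nn by simp
  next
    case (Suc t)
    have tin: "Suc t \<in> {1..tstar}" using Suc.prems by simp
    have tr: "R_upd T Obs (zs (Suc t)) (b t) (ys (Suc t)) \<noteq> 0 \<and>
                 b (Suc t) = f_upd T Obs (zs (Suc t)) (b t) (ys (Suc t))"
      using bspec[OF traj tin] by simp
    have nnt: "\<And>h. 0 \<le> b t h" using Suc by simp
    have Rp: "0 < R_upd T Obs (zs (Suc t)) (b t) (ys (Suc t))"
      using tr Rnn[of "b t" "zs (Suc t)" "ys (Suc t)", OF nnt] by linarith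
    have "0 \<le> S_upd T Obs (zs (Suc t)) (b t) (ys (Suc t)) h"
      unfolding S_upd_def using Tnn Onn nnt by (auto intro!: sum_nonneg mult_nonneg_nonneg)
    then show ?case using tr Rp by (simp add: f_upd_def)
  qed
  have dec: "B (real t) (b t) \<le> B (real t - 1) (b (t - 1))" if tin: "t \<in> {1..tstar}" for t
  proof -
    obtain q where q: "sos_fun q" and qe: "\<forall>x. R_upd T Obs (zs t) x (ys t) \<noteq> 0 \<longrightarrow>
           q (\<lambda>v. case v of None \<Rightarrow> real t | Some h \<Rightarrow> x h) =
           - ((R_upd T Obs (zs t) x (ys t)) ^ d) *
               (B (real t) (f_upd T Obs (zs t) x (ys t)) - B (real t - 1) x)"
      using cond_iii tin by blast
    let ?R = "R_upd T Obs (zs t) (b (t - 1)) (ys t)"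
    have tr: "?R \<noteq> 0 \<and> b t = f_upd T Obs (zs t) (b (t - 1)) (ys t)"
      using bspec[OF traj tin] by simp
    have nnt: "\<And>h. 0 \<le> b (t - 1) h" using nn[of "t - 1"] tin by auto
    have Rp: "0 < ?R" using tr Rnn[of "b (t - 1)" "zs t" "ys t", OF nnt] by linarith
    have "0 \<le> - (?R ^ d) * (B (real t) (b t) - B (real t - 1) (b (t - 1)))"
    proof -
      have e: "q (\<lambda>v. case v of None \<Rightarrow> real t | Some h \<Rightarrow> b (t - 1) h) =
           - (?R ^ d) * (B (real t) (f_upd T Obs (zs t) (b (t - 1)) (ys t)) - B (real t - 1) (b (t - 1)))"
        using qe tr by blast
      have "0 \<le> q (\<lambda>v. case v of None \<Rightarrow> real t | Some h \<Rightarrow> b (t - 1) h)" by (rule sos_nonneg[OF q])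
      moreover have "b t = f_upd T Obs (zs t) (b (t - 1)) (ys t)" using tr by blast
      ultimately show ?thesis using e by simp
    qed
    moreover have "0 < ?R ^ d" using Rp by simp
    ultimately show ?thesis by (simp add: mult_le_0_iff)
  qed
  have chain: "t \<le> tstar \<Longrightarrow> B (real t) (b t) < 0" for t
  proof (induction t)
    case 0 then show ?case using cond_ii s_pos traj0 by simp
  next
    case (Suc t)
    have "B (real (Suc t)) (b (Suc t)) \<le> B (real t) (b t)"
      using dec[of "Suc t"] Suc.prems by simp
    then show ?case using Suc by simp
  qed
  have fin: "B (real tstar) (b tstar) < 0" using chain by simp
  have lamle: "lam \<le> b tstar hstar"
  proof (rule ccontr)
    assume "\<not> ?thesis"
    moreover have "0 \<le> pf (b tstar)" using sos_nonneg[OF pf_sos] .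
    moreover have "0 \<le> B (real tstar) (b tstar) + pf (b tstar) * (b tstar hstar - lam) - s1"
      using sos_nonneg[OF cond_i] .
    ultimately have "pf (b tstar) * (b tstar hstar - lam) \<le> 0"
      by (simp add: mult_nonneg_nonpos)
    then show False using fin s_pos \<open>0 \<le> B (real tstar) (b tstar) + pf (b tstar) * (b tstar hstar - lam) - s1\<close>
      by linarith
  qed
  then show ?thesis unfolding fail_set_def by auto
qed

end
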